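(* Let $n\geq 2$, $1<p<\infty$, $\epsilon>0$, let $U\subset\mathbb{R}^n$ be a smooth bounded domain and let $u^\epsilon\in C^\infty(U)\cap C^0(\overline U)$ solve $\operatorname{div}\big((|Du^\epsilon|^2+\epsilon)^{\frac{p-2}{2}}Du^\epsilon\big)=0$ in $U$. Let $\mu=(|Du^\epsilon|^2+\epsilon)^{1/2}$. Then $$|D^2u^\epsilon|^2\geq 2|D|Du^\epsilon||^2+\Phi\,(\Delta^N_\infty u^\epsilon)^2$$ almost everywhere in $U$, where $$\Phi=\frac{(p-1)^2}{n-1}-1-\frac{\epsilon}{\mu^2}\cdot\frac{2(p-1)(p-2)}{n-1}+\frac{\epsilon^2}{\mu^4}\cdot\frac{(p-2)^2}{n-1}.$$ If $n=2$, equality holds almost everywhere.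
   Context: $|Du^\epsilon|$ is locally Lipschitz, hence differentiable a.e.; at such points where $Du^\epsilon=0$ one has $D|Du^\epsilon|=0$. The normalized infinity Laplacian is defined a.e. by $\Delta^N_\infty u^\epsilon=\langle \frac{Du^\epsilon}{|Du^\epsilon|},D|Du^\epsilon|\rangle$ (interpreted as $0$ where $Du^\epsilon=0$), so that $\Delta^N_\infty u^\epsilon=\langle Du^\epsilon,D^2u^\epsilon Du^\epsilon\rangle/|Du^\epsilon|^2$ where $Du^\epsilon\neq0$. $|D^2u^\epsilon|$ is the Hilbert–Schmidt norm of the Hessian. *)

theory Defs
  imports "HOL-Analysis.Analysis"
begin

definition pderiv_i :: "'n::finite \<Rightarrow> (real^'n \<Rightarrow> real) \<Rightarrow> real^'n \<Rightarrow> real" where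
  "pderiv_i i f x = frechet_derivative f (at x) (axis i 1)"

definition grad :: "(real^'n::finite \<Rightarrow> real) \<Rightarrow> real^'n \<Rightarrow> real^'n" where
  "grad f x = (\<chi> i. pderiv_i i f x)"

definition hess :: "(real^'n::finite \<Rightarrow> real) \<Rightarrow> real^'n \<Rightarrow> real^'n^'n" where
  "hess f x = (\<chi> i j. pderiv_i j (\<lambda>y. pderiv_i i f y) x)"

definition hs_norm_sq :: "real^'n::finite^'n \<Rightarrow> real" where
  "hs_norm_sq H = (\<Sum>i\<in>UNIV. \<Sum>j\<in>UNIV. (H $ i $ j)^2)"

primrec Ck_on :: "nat \<Rightarrow> (real^'n::finite) set \<Rightarrow> (real^'n \<Rightarrow> real) \<Rightarrow> bool" where
  "Ck_on 0 U f = continuous_on U f"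
| "Ck_on (Suc k) U f = (continuous_on U f \<and> (\<forall>x\<in>U. f differentiable (at x)) \<and>
        (\<forall>i. Ck_on k U (pderiv_i i f)))"

definition smooth_on :: "(real^'n::finite) set \<Rightarrow> (real^'n \<Rightarrow> real) \<Rightarrow> bool" where
  "smooth_on U f = (\<forall>k. Ck_on k U f)"

definition smooth_bounded_domain :: "(real^'n::finite) set \<Rightarrow> bool" where
  "smooth_bounded_domain U \<longleftrightarrow> open U \<and> connected U \<and> bounded U \<and> U \<noteq> {} \<and>
     (\<forall>z\<in>frontier U. \<exists>r>0. \<exists>\<phi>. smooth_on UNIV \<phi> \<and> (\<forall>x\<in>ball z r. grad \<phi> x \<noteq> 0) \<and>
          U \<inter> ball z r = {x\<in>ball z r. \<phi> x < 0})"

text \<open>Normalized infinity Laplacian <Du/|Du|, D|Du|>, interpreted as 0 where Du = 0.\<close>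
definition ninf_lap :: "(real^'n::finite \<Rightarrow> real) \<Rightarrow> real^'n \<Rightarrow> real" where
  "ninf_lap f x = (if grad f x = 0 then 0
     else inner ((1 / norm (grad f x)) *\<^sub>R grad f x) (grad (\<lambda>y. norm (grad f y)) x))"

end

theory Submission
  imports Defs
begin

lemma linear_real_expand:
  fixes F :: "real^'n::finite \<Rightarrow> real"
  assumes "linear F"
  shows "F h = (\<Sum>i\<in>UNIV. F (axis i 1) * h $ i)"
proof -
  have "F h = F (\<Sum>i\<in>UNIV. h $ i *\<^sub>R axis i 1)"
    using basis_expansion[of h] by (simp add: scalar_mult_eq_scaleR)
  also have "\<dots> = (\<Sum>i\<in>UNIV. h $ i * F (axis i 1))"
    using assms by (simp add: linear_sum linear_scale)
  finally show ?thesis by (simp add: mult.commute)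
qed

lemma deriv_grad:
  fixes f :: "real^'n::finite \<Rightarrow> real"
  assumes "f differentiable (at x)"
  shows "(f has_derivative (\<lambda>h. grad f x \<bullet> h)) (at x)"
proof -
  let ?F = "frechet_derivative f (at x)"
  have d: "(f has_derivative ?F) (at x)" using assms frechet_derivative_works by blast
  have lin: "linear ?F" using assms linear_frechet_derivative by blast
  have "?F h = grad f x \<bullet> h" for h
    using linear_real_expand[OF lin, of h]
    by (simp add: grad_def pderiv_i_def inner_vec_def)
  then have "?F = (\<lambda>h. grad f x \<bullet> h)" by auto
  with d show ?thesis by simp
qed

lemma grad_of_deriv:
  fixes f :: "real^'n::finite \<Rightarrow> real"
  assumes "(f has_derivative (\<lambda>h. c \<bullet> h)) (at x)"
  shows "pderiv_i i f x = c $ i" "grad f x = c"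
proof -
  have "frechet_derivative f (at x) = (\<lambda>h. c \<bullet> h)"
    using frechet_derivative_at[OF assms] by simp
  then show "pderiv_i i f x = c $ i" for i
    by (simp add: pderiv_i_def inner_axis)
  then show "grad f x = c" by (simp add: grad_def vec_eq_iff)
qed

lemma norm_sq_vec: "norm (v::real^'n::finite)^2 = (\<Sum>i\<in>UNIV. (v$i)^2)"
  unfolding power2_norm_eq_inner inner_vec_def by (simp add: power2_eq_square)

lemma line_deriv:
  fixes f :: "real^'n::finite \<Rightarrow> real"
  assumes "f differentiable (at (y + t *\<^sub>R axis k 1))"
  shows "((\<lambda>s. f (y + s *\<^sub>R axis k 1)) has_real_derivative pderiv_i k f (y + t *\<^sub>R axis k 1)) (at t)"
proof -
  have d1: "((\<lambda>s. y + s *\<^sub>R axis k 1) has_derivative (\<lambda>s. s *\<^sub>R axis k 1)) (at t)"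
    by (auto intro!: derivative_eq_intros)
  have d2: "(f has_derivative (\<lambda>h. grad f (y + t *\<^sub>R axis k 1) \<bullet> h)) (at (y + t *\<^sub>R axis k 1))"
    using deriv_grad[OF assms] .
  have "((\<lambda>s. f (y + s *\<^sub>R axis k 1)) has_derivative (\<lambda>s. grad f (y + t *\<^sub>R axis k 1) \<bullet> (s *\<^sub>R axis k 1))) (at t)"
    using diff_chain_at[OF d1 d2] by (simp add: o_def)
  moreover have "(\<lambda>s. grad f (y + t *\<^sub>R axis k 1) \<bullet> (s *\<^sub>R axis k 1)) = (\<lambda>s. pderiv_i k f (y + t *\<^sub>R axis k 1) * s)"
    by (auto simp: grad_def inner_axis)
  ultimately show ?thesis by (simp add: has_field_derivative_def)
qed
lemma mixed_mvt:
  fixes f :: "real^'n::finite \<Rightarrow> real"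
  assumes s: "s > 0"
   and diff: "\<And>a b. 0 \<le> a \<Longrightarrow> a \<le> s \<Longrightarrow> 0 \<le> b \<Longrightarrow> b \<le> s \<Longrightarrow>
        f differentiable (at (x + a *\<^sub>R axis i 1 + b *\<^sub>R axis j 1)) \<and>
        pderiv_i i f differentiable (at (x + a *\<^sub>R axis i 1 + b *\<^sub>R axis j 1))"
  shows "\<exists>a b. 0 \<le> a \<and> a \<le> s \<and> 0 \<le> b \<and> b \<le> s \<and>
     f (x + s *\<^sub>R axis i 1 + s *\<^sub>R axis j 1) - f (x + s *\<^sub>R axis i 1) - f (x + s *\<^sub>R axis j 1) + f x
       = s * s * pderiv_i j (pderiv_i i f) (x + a *\<^sub>R axis i 1 + b *\<^sub>R axis j 1)"
proof -
  define ei where "ei = (axis i 1 :: real^'n)"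
  define ej where "ej = (axis j 1 :: real^'n)"
  define \<phi> where "\<phi> t = f ((x + s *\<^sub>R ej) + t *\<^sub>R ei) - f (x + t *\<^sub>R ei)" for t
  have dphi: "(\<phi> has_real_derivative (pderiv_i i f ((x + s *\<^sub>R ej) + t *\<^sub>R ei) - pderiv_i i f (x + t *\<^sub>R ei))) (at t)"
    if "0 \<le> t" "t \<le> s" for t
  proof -
    have e1: "(x + s *\<^sub>R ej) + t *\<^sub>R ei = x + t *\<^sub>R ei + s *\<^sub>R ej" by (simp add: algebra_simps)
    have e2: "x + t *\<^sub>R ei = x + t *\<^sub>R ei + 0 *\<^sub>R ej" by simp
    have d1: "f differentiable (at ((x + s *\<^sub>R ej) + t *\<^sub>R ei))"
    proof -
      have "f differentiable (at (x + t *\<^sub>R ei + s *\<^sub>R ej))"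
        using diff[of t s] that s unfolding ei_def ej_def by auto
      then show ?thesis by (subst e1)
    qed
    have d2: "f differentiable (at (x + t *\<^sub>R ei))"
      using diff[of t 0] that s unfolding ei_def ej_def by auto
    show ?thesis unfolding \<phi>_def ei_def
      by (intro DERIV_diff line_deriv) (use d1 d2 in \<open>auto simp: ei_def\<close>)
  qed
  obtain \<xi> where \<xi>: "0 < \<xi>" "\<xi> < s"
     and eq1: "\<phi> s - \<phi> 0 = (s - 0) * (pderiv_i i f ((x + s *\<^sub>R ej) + \<xi> *\<^sub>R ei) - pderiv_i i f (x + \<xi> *\<^sub>R ei))"
    using MVT2[OF s, of \<phi> "\<lambda>t. pderiv_i i f ((x + s *\<^sub>R ej) + t *\<^sub>R ei) - pderiv_i i f (x + t *\<^sub>R ei)"] dphi by auto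
  define \<psi> where "\<psi> t = pderiv_i i f ((x + \<xi> *\<^sub>R ei) + t *\<^sub>R ej)" for t
  have dpsi: "(\<psi> has_real_derivative pderiv_i j (pderiv_i i f) ((x + \<xi> *\<^sub>R ei) + t *\<^sub>R ej)) (at t)"
    if "0 \<le> t" "t \<le> s" for t
    unfolding \<psi>_def ej_def
    by (rule line_deriv) (use diff[of \<xi> t] that \<xi> in \<open>auto simp: ei_def\<close>)
  obtain \<eta> where \<eta>: "0 < \<eta>" "\<eta> < s"
     and eq2: "\<psi> s - \<psi> 0 = (s - 0) * pderiv_i j (pderiv_i i f) ((x + \<xi> *\<^sub>R ei) + \<eta> *\<^sub>R ej)"
    using MVT2[OF s, of \<psi> "\<lambda>t. pderiv_i j (pderiv_i i f) ((x + \<xi> *\<^sub>R ei) + t *\<^sub>R ej)"] dpsi by auto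
  have "\<psi> s = pderiv_i i f ((x + s *\<^sub>R ej) + \<xi> *\<^sub>R ei)"
    unfolding \<psi>_def by (simp add: algebra_simps)
  moreover have "\<psi> 0 = pderiv_i i f (x + \<xi> *\<^sub>R ei)" unfolding \<psi>_def by simp
  ultimately have "\<phi> s - \<phi> 0 = s * s * pderiv_i j (pderiv_i i f) ((x + \<xi> *\<^sub>R ei) + \<eta> *\<^sub>R ej)"
    using eq1 eq2 by simp
  moreover have "\<phi> s - \<phi> 0 = f (x + s *\<^sub>R ei + s *\<^sub>R ej) - f (x + s *\<^sub>R ei) - f (x + s *\<^sub>R ej) + f x"
    unfolding \<phi>_def by (simp add: algebra_simps)
  ultimately show ?thesis using \<xi> \<eta> unfolding ei_def ej_def
    by (intro exI[of _ \<xi>] exI[of _ \<eta>]) auto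
qed

lemma schwarz:
  fixes f :: "real^'n::finite \<Rightarrow> real"
  assumes U: "open U" "x \<in> U"
    and d0: "\<And>y. y \<in> U \<Longrightarrow> f differentiable (at y)"
    and di: "\<And>y. y \<in> U \<Longrightarrow> pderiv_i i f differentiable (at y)"
    and dj: "\<And>y. y \<in> U \<Longrightarrow> pderiv_i j f differentiable (at y)"
    and ci: "continuous_on U (pderiv_i j (pderiv_i i f))"
    and cj: "continuous_on U (pderiv_i i (pderiv_i j f))"
  shows "pderiv_i j (pderiv_i i f) x = pderiv_i i (pderiv_i j f) x"
proof (rule ccontr)
  define A where "A = pderiv_i j (pderiv_i i f) x"
  define B where "B = pderiv_i i (pderiv_i j f) x"
  assume "pderiv_i j (pderiv_i i f) x \<noteq> pderiv_i i (pderiv_i j f) x"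
  then have AB: "A \<noteq> B" by (simp add: A_def B_def)
  define \<delta> where "\<delta> = \<bar>A - B\<bar> / 3"
  have \<delta>: "\<delta> > 0" using AB by (simp add: \<delta>_def)
  have "continuous (at x) (pderiv_i j (pderiv_i i f))"
    using ci U continuous_on_eq_continuous_at by blast
  then obtain r1 where r1: "r1 > 0" "\<And>y. dist y x < r1 \<Longrightarrow> dist (pderiv_i j (pderiv_i i f) y) A < \<delta>"
    using \<delta> unfolding continuous_at_eps_delta A_def by blast
  have "continuous (at x) (pderiv_i i (pderiv_i j f))"
    using cj U continuous_on_eq_continuous_at by blast
  then obtain r2 where r2: "r2 > 0" "\<And>y. dist y x < r2 \<Longrightarrow> dist (pderiv_i i (pderiv_i j f) y) B < \<delta>"
    using \<delta> unfolding continuous_at_eps_delta B_def by blast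
  obtain r0 where r0: "r0 > 0" "ball x r0 \<subseteq> U" using U open_contains_ball by blast
  define s where "s = min r0 (min r1 r2) / 3"
  have s: "s > 0" using r0 r1 r2 by (simp add: s_def)
  have near: "dist (x + a *\<^sub>R axis k 1 + b *\<^sub>R axis l 1) x < min r0 (min r1 r2)"
    if "0 \<le> a" "a \<le> s" "0 \<le> b" "b \<le> s" for a b k l
  proof -
    have "dist (x + a *\<^sub>R axis k 1 + b *\<^sub>R axis l 1) x = norm (a *\<^sub>R axis k 1 + b *\<^sub>R (axis l 1 :: real^'n))"
      by (simp add: dist_norm)
    also have "\<dots> \<le> norm (a *\<^sub>R (axis k 1 :: real^'n)) + norm (b *\<^sub>R (axis l 1 :: real^'n))"
      by (rule norm_triangle_ineq)
    also have "\<dots> = a + b" using that by simp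
    also have "\<dots> < min r0 (min r1 r2)" using that s unfolding s_def by linarith
    finally show ?thesis .
  qed
  have inU: "x + a *\<^sub>R axis k 1 + b *\<^sub>R axis l 1 \<in> U"
    if "0 \<le> a" "a \<le> s" "0 \<le> b" "b \<le> s" for a b k l
    using near[OF that, of k l] r0 by (auto simp: dist_commute)
  obtain a1 b1 where ab1: "0 \<le> a1" "a1 \<le> s" "0 \<le> b1" "b1 \<le> s"
    and e1: "f (x + s *\<^sub>R axis i 1 + s *\<^sub>R axis j 1) - f (x + s *\<^sub>R axis i 1) - f (x + s *\<^sub>R axis j 1) + f x
       = s * s * pderiv_i j (pderiv_i i f) (x + a1 *\<^sub>R axis i 1 + b1 *\<^sub>R axis j 1)"
    using mixed_mvt[OF s, of f x i j] inU d0 di by blast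
  obtain a2 b2 where ab2: "0 \<le> a2" "a2 \<le> s" "0 \<le> b2" "b2 \<le> s"
    and e2: "f (x + s *\<^sub>R axis j 1 + s *\<^sub>R axis i 1) - f (x + s *\<^sub>R axis j 1) - f (x + s *\<^sub>R axis i 1) + f x
       = s * s * pderiv_i i (pderiv_i j f) (x + a2 *\<^sub>R axis j 1 + b2 *\<^sub>R axis i 1)"
    using mixed_mvt[OF s, of f x j i] inU d0 dj by blast
  have pe: "x + s *\<^sub>R axis j 1 + s *\<^sub>R axis i 1 = x + s *\<^sub>R axis i 1 + s *\<^sub>R (axis j 1 :: real^'n)"
    by (simp add: algebra_simps)
  have "s * s * pderiv_i j (pderiv_i i f) (x + a1 *\<^sub>R axis i 1 + b1 *\<^sub>R axis j 1)
     = s * s * pderiv_i i (pderiv_i j f) (x + a2 *\<^sub>R axis j 1 + b2 *\<^sub>R axis i 1)"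
    using e1 e2[unfolded pe] by linarith
  then have eq: "pderiv_i j (pderiv_i i f) (x + a1 *\<^sub>R axis i 1 + b1 *\<^sub>R axis j 1)
     = pderiv_i i (pderiv_i j f) (x + a2 *\<^sub>R axis j 1 + b2 *\<^sub>R axis i 1)"
    using s by simp
  have "dist (pderiv_i j (pderiv_i i f) (x + a1 *\<^sub>R axis i 1 + b1 *\<^sub>R axis j 1)) A < \<delta>"
    using r1(2) near[OF ab1, of i j] by simp
  moreover have "dist (pderiv_i i (pderiv_i j f) (x + a2 *\<^sub>R axis j 1 + b2 *\<^sub>R axis i 1)) B < \<delta>"
    using r2(2) near[OF ab2, of j i] by simp
  ultimately have "\<bar>A - B\<bar> < 2 * \<delta>" using eq by (simp add: dist_real_def)
  then show False using \<delta> by (simp add: \<delta>_def)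
qed


lemma hs_inner: "hs_norm_sq H = inner H H"
  by (simp add: hs_norm_sq_def inner_vec_def power2_eq_square)

lemma two_by_two:
  fixes m00 m01 m11 w0 w1 :: real
  assumes "m00*w0 + m01*w1 = 0" "m01*w0 + m11*w1 = 0" "w0*w0 + w1*w1 = 1"
  shows "m00^2 + m01^2 + m01^2 + m11^2 = (m00 + m11)^2"
proof -
  have "(m01^2 - m00*m11)*(w0*w0+w1*w1) = (m01*w1 - m11*w0)*(m00*w0 + m01*w1) + (m01*w0 - m00*w1)*(m01*w0+m11*w1)"
    by (simp add: algebra_simps power2_eq_square)
  then have "m01^2 = m00*m11" using assms by simp
  then show ?thesis by (simp add: power2_eq_square algebra_simps)
qed

lemma hs_ineq:
  fixes H :: "real^'n::finite^'n" and v :: "real^'n"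
  assumes sym: "\<And>i j. H$i$j = H$j$i" and v: "(\<Sum>i\<in>UNIV. v$i * v$i) = 1"
    and n2: "CARD('n) \<ge> 2"
  defines "q \<equiv> (\<chi> i. \<Sum>j\<in>UNIV. H$i$j * v$j)"
  defines "a \<equiv> (\<Sum>i\<in>UNIV. v$i * q$i)"
  defines "t \<equiv> (\<Sum>i\<in>UNIV. H$i$i)"
  defines "Q \<equiv> (\<Sum>i\<in>UNIV. q$i * q$i)"
  shows "hs_norm_sq H \<ge> 2*Q - a^2 + (t - a)^2/(real CARD('n) - 1)"
    and "CARD('n) = 2 \<Longrightarrow> hs_norm_sq H = 2*Q - a^2 + (t - a)^2/(real CARD('n) - 1)"
proof -
  define X :: "real^'n^'n" where "X = (\<chi> i j. v$i * q$j)"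
  define Y :: "real^'n^'n" where "Y = (\<chi> i j. q$i * v$j)"
  define Z :: "real^'n^'n" where "Z = (\<chi> i j. v$i * v$j)"
  define E :: "real^'n^'n" where "E = (\<chi> i j. if i = j then 1 else 0)"
  define M where "M = H - X - Y + a *\<^sub>R Z"
  define P where "P = E - Z"
  have qj: "(\<Sum>i\<in>UNIV. H$i$j * v$i) = q$j" for j
    by (simp add: q_def sym)
  have HX: "inner H X = Q"
  proof -
    have "inner H X = (\<Sum>i\<in>UNIV. \<Sum>j\<in>UNIV. H$i$j * (v$i * q$j))"
      by (simp add: inner_vec_def X_def)
    also have "\<dots> = (\<Sum>j\<in>UNIV. (\<Sum>i\<in>UNIV. H$i$j * v$i) * q$j)"
      by (subst sum.swap) (simp add: sum_distrib_right mult.assoc)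
    also have "\<dots> = Q" by (simp add: qj Q_def)
    finally show ?thesis .
  qed
  have HY: "inner H Y = Q"
  proof -
    have "inner H Y = (\<Sum>i\<in>UNIV. \<Sum>j\<in>UNIV. H$i$j * (q$i * v$j))"
      by (simp add: inner_vec_def Y_def)
    also have "\<dots> = (\<Sum>i\<in>UNIV. q$i * (\<Sum>j\<in>UNIV. H$i$j * v$j))"
      by (simp add: sum_distrib_left mult_ac)
    also have "\<dots> = Q" by (simp add: q_def Q_def)
    finally show ?thesis .
  qed
  have HZ: "inner H Z = a"
  proof -
    have "inner H Z = (\<Sum>i\<in>UNIV. \<Sum>j\<in>UNIV. H$i$j * (v$i * v$j))"
      by (simp add: inner_vec_def Z_def)
    also have "\<dots> = (\<Sum>i\<in>UNIV. v$i * (\<Sum>j\<in>UNIV. H$i$j * v$j))"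
      by (simp add: sum_distrib_left mult_ac)
    also have "\<dots> = a" by (simp add: q_def a_def)
    finally show ?thesis .
  qed
  have XX: "inner X X = Q"
  proof -
    have "inner X X = (\<Sum>i\<in>UNIV. v$i * v$i) * (\<Sum>j\<in>UNIV. q$j * q$j)"
      by (simp add: inner_vec_def X_def sum_product mult_ac) (rule sum.swap)
    then show ?thesis using v by (simp add: Q_def)
  qed
  have YY: "inner Y Y = Q"
  proof -
    have "inner Y Y = (\<Sum>i\<in>UNIV. q$i * q$i) * (\<Sum>j\<in>UNIV. v$j * v$j)"
      unfolding sum_product by (simp add: inner_vec_def Y_def mult_ac)
    then show ?thesis using v by (simp add: Q_def)
  qed
  have XY: "inner X Y = a^2"
  proof -
    have "inner X Y = (\<Sum>i\<in>UNIV. v$i * q$i) * (\<Sum>j\<in>UNIV. v$j * q$j)"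
      by (simp add: inner_vec_def X_def Y_def sum_product mult_ac)
    then show ?thesis by (simp add: a_def power2_eq_square)
  qed
  have XZ: "inner X Z = a"
  proof -
    have "inner X Z = (\<Sum>i\<in>UNIV. v$i * v$i) * (\<Sum>j\<in>UNIV. v$j * q$j)"
      by (simp add: inner_vec_def X_def Z_def sum_product mult_ac) (subst sum.swap, simp add: mult_ac)
    then show ?thesis using v by (simp add: a_def)
  qed
  have YZ: "inner Y Z = a"
  proof -
    have "inner Y Z = (\<Sum>i\<in>UNIV. v$i * q$i) * (\<Sum>j\<in>UNIV. v$j * v$j)"
      by (simp add: inner_vec_def Y_def Z_def sum_product mult_ac)
    then show ?thesis using v by (simp add: a_def)
  qed
  have ZZ: "inner Z Z = 1"
  proof -
    have "inner Z Z = (\<Sum>i\<in>UNIV. v$i * v$i) * (\<Sum>j\<in>UNIV. v$j * v$j)"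
      by (simp add: inner_vec_def Z_def sum_product mult_ac)
    then show ?thesis using v by simp
  qed
  have HE: "inner H E = t"
    by (simp add: inner_vec_def E_def t_def if_distrib cong: if_cong)
  have XE: "inner X E = a"
    by (simp add: inner_vec_def E_def X_def a_def if_distrib cong: if_cong)
  have YE: "inner Y E = a"
    by (simp add: inner_vec_def E_def Y_def a_def if_distrib mult.commute cong: if_cong)
  have ZE: "inner Z E = 1"
    using v by (simp add: inner_vec_def E_def Z_def if_distrib cong: if_cong)
  have EE: "inner E E = real CARD('n)"
    by (simp add: inner_vec_def E_def if_distrib cong: if_cong)
  have XH: "inner X H = Q" using HX by (simp add: inner_commute)
  have YH: "inner Y H = Q" using HY by (simp add: inner_commute)
  have ZH: "inner Z H = a" using HZ by (simp add: inner_commute)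
  have YX: "inner Y X = a^2" using XY by (simp add: inner_commute)
  have ZX: "inner Z X = a" using XZ by (simp add: inner_commute)
  have ZY: "inner Z Y = a" using YZ by (simp add: inner_commute)
  have EH: "inner E H = t" using HE by (simp add: inner_commute)
  have EX: "inner E X = a" using XE by (simp add: inner_commute)
  have EY: "inner E Y = a" using YE by (simp add: inner_commute)
  have EZ: "inner E Z = 1" using ZE by (simp add: inner_commute)
  note facts = HX HY HZ XX YY XY XZ YZ ZZ XH YH ZH YX ZX ZY HE XE YE ZE EH EX EY EZ EE
  have MM: "inner M M = hs_norm_sq H - 2*Q + a^2"
    unfolding M_def hs_inner
    by (simp only: inner_add_left inner_add_right inner_diff_left inner_diff_right
        inner_scaleR_left inner_scaleR_right facts; simp add: algebra_simps power2_eq_square)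
  have MP: "inner M P = t - a"
    unfolding M_def P_def
    by (simp only: inner_add_left inner_add_right inner_diff_left inner_diff_right
        inner_scaleR_left inner_scaleR_right facts; simp add: algebra_simps)
  have PP: "inner P P = real CARD('n) - 1"
    unfolding P_def
    by (simp only: inner_add_left inner_add_right inner_diff_left inner_diff_right
        inner_scaleR_left inner_scaleR_right facts; simp add: algebra_simps)
  have cs: "(t - a)^2 \<le> inner M M * (real CARD('n) - 1)"
    using Cauchy_Schwarz_ineq[of M P] MP PP by simp
  have npos: "real CARD('n) - 1 > 0" using n2 by simp
  have "(t - a)^2/(real CARD('n) - 1) \<le> inner M M"
    using cs npos by (simp add: divide_le_eq)
  then show "hs_norm_sq H \<ge> 2*Q - a^2 + (t - a)^2/(real CARD('n) - 1)"
    using MM by simp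
  show "CARD('n) = 2 \<Longrightarrow> hs_norm_sq H = 2*Q - a^2 + (t - a)^2/(real CARD('n) - 1)"
  proof -
    assume c2: "CARD('n) = 2"
    then obtain i0 j0 :: 'n where ij: "UNIV = {i0, j0}" "i0 \<noteq> j0"
      using card_2_iff by metis
    have Mij: "M$i$j = H$i$j - v$i*q$j - q$i* v$j + a*(v$i* v$j)" for i j
      by (simp add: M_def X_def Y_def Z_def)
    have Msym: "M$i$j = M$j$i" for i j
      unfolding Mij using sym[of i j] by (simp add: algebra_simps)
    have ker: "(\<Sum>j\<in>UNIV. M$i$j * v$j) = 0" for i
    proof -
      have "(\<Sum>j\<in>UNIV. M$i$j * v$j) = (\<Sum>j\<in>UNIV. H$i$j * v$j) - v$i * (\<Sum>j\<in>UNIV. v$j * q$j)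
          - q$i * (\<Sum>j\<in>UNIV. v$j * v$j) + a * v$i * (\<Sum>j\<in>UNIV. v$j * v$j)"
        unfolding Mij by (simp add: algebra_simps sum.distrib sum_subtractf sum_distrib_left)
      also have "\<dots> = 0" using v by (simp add: q_def a_def mult.commute)
      finally show ?thesis .
    qed
    have sum2: "(\<Sum>i\<in>UNIV. f i) = f i0 + f j0" for f :: "'n \<Rightarrow> real"
      unfolding ij(1) using ij(2) by simp
    have ME: "inner M E = t - a"
      unfolding M_def
      by (simp only: inner_add_left inner_diff_left inner_scaleR_left facts; simp)
    have tr: "inner M E = M$i0$i0 + M$j0$j0"
      using ij(2) by (simp add: inner_vec_def E_def sum2)
    have MM2: "inner M M = (M$i0$i0)^2 + (M$i0$j0)^2 + (M$i0$j0)^2 + (M$j0$j0)^2"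
      using Msym[of j0 i0] by (simp add: inner_vec_def sum2 power2_eq_square)
    have k1: "M$i0$i0 * v$i0 + M$i0$j0 * v$j0 = 0" using ker[of i0] by (simp add: sum2)
    have k2: "M$i0$j0 * v$i0 + M$j0$j0 * v$j0 = 0" using ker[of j0] Msym[of j0 i0] by (simp add: sum2)
    have vv: "v$i0 * v$i0 + v$j0 * v$j0 = 1" using v by (simp add: sum2)
    have "inner M M = (t - a)^2"
      using two_by_two[OF k1 k2 vv] MM2 tr ME by simp
    then show ?thesis using MM c2 by simp
  qed
qed


lemma pderiv_of:
  fixes f :: "real^'n::finite \<Rightarrow> real"
  assumes "(f has_derivative f') (at x)"
  shows "pderiv_i i f x = f' (axis i 1)"
  using frechet_derivative_at[OF assms] by (simp add: pderiv_i_def)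

lemma Ck2_facts:
  assumes "Ck_on 2 U u"
  shows "\<And>y. y \<in> U \<Longrightarrow> u differentiable (at y)"
    and "\<And>i y. y \<in> U \<Longrightarrow> pderiv_i i u differentiable (at y)"
    and "\<And>i j. continuous_on U (pderiv_i j (pderiv_i i u))"
  using assms by (simp_all add: numeral_2_eq_2)

lemma hess_sym:
  assumes "open U" "x \<in> U" "Ck_on 2 U u"
  shows "hess u x $ i $ j = hess u x $ j $ i"
proof -
  note F = Ck2_facts[OF assms(3)]
  have "pderiv_i j (pderiv_i i u) x = pderiv_i i (pderiv_i j u) x"
    by (rule schwarz[OF assms(1,2)]) (use F in auto)
  then show ?thesis by (simp add: hess_def)
qed

lemma grad_pderiv_hess: "grad (pderiv_i i u) x $ j = hess u x $ i $ j"
  by (simp add: grad_def hess_def)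

lemma deriv_normsq:
  fixes u :: "real^'n::finite \<Rightarrow> real"
  assumes dg: "\<And>i. pderiv_i i u differentiable (at x)"
  defines "q0 \<equiv> (\<chi> j. \<Sum>i\<in>UNIV. grad u x $ i * hess u x $ i $ j)"
  shows "((\<lambda>y. norm (grad u y)^2) has_derivative (\<lambda>h. (2 *\<^sub>R q0) \<bullet> h)) (at x)"
proof -
  have fe: "(\<lambda>y. norm (grad u y)^2) = (\<lambda>y. \<Sum>i\<in>UNIV. pderiv_i i u y * pderiv_i i u y)"
    by (rule ext, simp only: norm_sq_vec, simp add: grad_def power2_eq_square)
  have d: "((\<lambda>y. \<Sum>i\<in>UNIV. pderiv_i i u y * pderiv_i i u y) has_derivative
      (\<lambda>h. \<Sum>i\<in>UNIV. pderiv_i i u x * (grad (pderiv_i i u) x \<bullet> h) + (grad (pderiv_i i u) x \<bullet> h) * pderiv_i i u x)) (at x)"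
    by (intro has_derivative_sum has_derivative_mult deriv_grad dg)
  have "(\<Sum>i\<in>UNIV. pderiv_i i u x * (grad (pderiv_i i u) x \<bullet> h) + (grad (pderiv_i i u) x \<bullet> h) * pderiv_i i u x)
      = (2 *\<^sub>R q0) \<bullet> h" for h
  proof -
    have "(\<Sum>i\<in>UNIV. pderiv_i i u x * (grad (pderiv_i i u) x \<bullet> h) + (grad (pderiv_i i u) x \<bullet> h) * pderiv_i i u x)
       = (\<Sum>i\<in>UNIV. \<Sum>j\<in>UNIV. 2 * (grad u x $ i * hess u x $ i $ j * h $ j))"
      by (simp add: inner_vec_def grad_pderiv_hess sum_distrib_left grad_def[of u] algebra_simps sum.distrib[symmetric])
    also have "\<dots> = (\<Sum>j\<in>UNIV. \<Sum>i\<in>UNIV. 2 * (grad u x $ i * hess u x $ i $ j * h $ j))"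
      by (rule sum.swap)
    also have "\<dots> = (2 *\<^sub>R q0) \<bullet> h"
      by (simp add: q0_def inner_vec_def sum_distrib_left sum_distrib_right mult_ac)
    finally show ?thesis .
  qed
  with d fe show ?thesis by simp
qed

lemma grad_norm_grad:
  fixes u :: "real^'n::finite \<Rightarrow> real"
  assumes dg: "\<And>i. pderiv_i i u differentiable (at x)" and nz: "grad u x \<noteq> 0"
  defines "q0 \<equiv> (\<chi> j. \<Sum>i\<in>UNIV. grad u x $ i * hess u x $ i $ j)"
  shows "grad (\<lambda>y. norm (grad u y)) x = (1 / norm (grad u x)) *\<^sub>R q0"
proof -
  have dG: "((\<lambda>y. norm (grad u y)^2) has_derivative (\<lambda>h. (2 *\<^sub>R q0) \<bullet> h)) (at x)"
    using deriv_normsq[OF dg] unfolding q0_def .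
  have pos: "norm (grad u x)^2 > 0" using nz by simp
  define D where "D = inverse (sqrt (norm (grad u x)^2)) / 2"
  have ds: "(sqrt has_derivative (\<lambda>z. D * z)) (at (norm (grad u x)^2))"
    using DERIV_real_sqrt[OF pos] unfolding has_field_derivative_def D_def .
  have "((\<lambda>y. sqrt (norm (grad u y)^2)) has_derivative (\<lambda>h. D * ((2 *\<^sub>R q0) \<bullet> h))) (at x)"
    using has_derivative_compose[OF dG ds] .
  moreover have "(\<lambda>y. sqrt (norm (grad u y)^2)) = (\<lambda>y. norm (grad u y))" by simp
  moreover have "(\<lambda>h. D * ((2 *\<^sub>R q0) \<bullet> h)) = (\<lambda>h. ((1 / norm (grad u x)) *\<^sub>R q0) \<bullet> h)"
    using nz by (auto simp: D_def field_simps)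
  ultimately have "((\<lambda>y. norm (grad u y)) has_derivative (\<lambda>h. ((1 / norm (grad u x)) *\<^sub>R q0) \<bullet> h)) (at x)"
    by simp
  then show ?thesis by (rule grad_of_deriv)
qed

lemma ninf_lap_val:
  fixes u :: "real^'n::finite \<Rightarrow> real"
  assumes dg: "\<And>i. pderiv_i i u differentiable (at x)" and nz: "grad u x \<noteq> 0"
  defines "q0 \<equiv> (\<chi> j. \<Sum>i\<in>UNIV. grad u x $ i * hess u x $ i $ j)"
  shows "ninf_lap u x = (q0 \<bullet> grad u x) / norm (grad u x)^2"
  using nz grad_norm_grad[OF dg nz]
  by (simp add: ninf_lap_def q0_def inner_commute power2_eq_square)

lemma pde_trace:
  fixes u :: "real^'n::finite \<Rightarrow> real"
  assumes dg: "\<And>i. pderiv_i i u differentiable (at x)" and eps: "\<epsilon> > 0"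
    and pde: "(\<Sum>i\<in>UNIV. pderiv_i i
            (\<lambda>y. (norm (grad u y)^2 + \<epsilon>) powr ((p - 2) / 2) * pderiv_i i u y) x) = 0"
  defines "q0 \<equiv> (\<chi> j. \<Sum>i\<in>UNIV. grad u x $ i * hess u x $ i $ j)"
  shows "(\<Sum>i\<in>UNIV. hess u x $ i $ i) = - (p - 2) * (q0 \<bullet> grad u x) / (norm (grad u x)^2 + \<epsilon>)"
proof -
  define gx where "gx = norm (grad u x)^2 + \<epsilon>"
  define r where "r = (p - 2) / 2"
  define W where "W = gx powr r"
  have gpos: "gx > 0" using eps by (simp add: gx_def add_nonneg_pos)
  have Wpos: "W > 0" using gpos by (simp add: W_def)
  have dG0: "((\<lambda>y. norm (grad u y)^2) has_derivative (\<lambda>h. (2 *\<^sub>R q0) \<bullet> h)) (at x)"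
    using deriv_normsq[OF dg] unfolding q0_def .
  have dG: "((\<lambda>y. norm (grad u y)^2 + \<epsilon>) has_derivative (\<lambda>h. (2 *\<^sub>R q0) \<bullet> h + 0)) (at x)"
    using has_derivative_add[OF dG0 has_derivative_const] .
  have dW: "((\<lambda>y. (norm (grad u y)^2 + \<epsilon>) powr r) has_derivative
       (\<lambda>h. gx powr r * (0 * ln gx + ((2 *\<^sub>R q0) \<bullet> h + 0) * r / gx))) (at x)"
    using has_derivative_powr[OF dG has_derivative_const, of r] gpos unfolding gx_def by simp
  have pd: "pderiv_i i (\<lambda>y. (norm (grad u y)^2 + \<epsilon>) powr ((p - 2) / 2) * pderiv_i i u y) x
      = W * (2 * q0 $ i * r / gx) * grad u x $ i + W * hess u x $ i $ i" for i
  proof -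
    have "((\<lambda>y. (norm (grad u y)^2 + \<epsilon>) powr r * pderiv_i i u y) has_derivative
       (\<lambda>h. (norm (grad u x)^2 + \<epsilon>) powr r * (grad (pderiv_i i u) x \<bullet> h)
          + gx powr r * (0 * ln gx + ((2 *\<^sub>R q0) \<bullet> h + 0) * r / gx) * pderiv_i i u x)) (at x)"
      using has_derivative_mult[OF dW deriv_grad[OF dg]] .
    from pderiv_of[OF this, of i] show ?thesis
      by (simp add: r_def W_def gx_def inner_axis grad_pderiv_hess grad_def[of u] algebra_simps)
  qed
  have "0 = (\<Sum>i\<in>UNIV. W * (2 * q0 $ i * r / gx) * grad u x $ i + W * hess u x $ i $ i)"
    using pde pd by simp
  also have "\<dots> = W * ((2 * r / gx) * (q0 \<bullet> grad u x) + (\<Sum>i\<in>UNIV. hess u x $ i $ i))"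
    by (simp add: sum.distrib sum_distrib_left inner_vec_def algebra_simps)
  finally have "(2 * r / gx) * (q0 \<bullet> grad u x) + (\<Sum>i\<in>UNIV. hess u x $ i $ i) = 0"
    using Wpos by simp
  then show ?thesis using gpos unfolding gx_def[symmetric] r_def
    by (simp add: field_simps)
qed

lemma phi_alg:
  fixes N2 \<epsilon> n p a t :: real
  assumes "N2 \<ge> 0" "\<epsilon> > 0" "n > 1" "t = - (p - 2) * (N2 * a) / (N2 + \<epsilon>)"
  shows "(t - a)^2 / (n - 1) - a^2 =
     ((p - 1)^2 / (n - 1) - 1 - \<epsilon> / (sqrt (N2 + \<epsilon>))^2 * (2 * (p - 1) * (p - 2) / (n - 1))
                    + \<epsilon>^2 / (sqrt (N2 + \<epsilon>))^4 * ((p - 2)^2 / (n - 1))) * a^2"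
proof -
  define m where "m = N2 + \<epsilon>"
  have m: "m > 0" using assms by (simp add: m_def)
  have s2: "(sqrt m)^2 = m" using m by simp
  have s4: "(sqrt m)^4 = m^2" using s2 by (metis power_mult numeral_times_numeral semiring_norm(12) power2_eq_square  mult_2_right numeral_Bit0)
  have N2: "N2 = m - \<epsilon>" by (simp add: m_def)
  define e where "e = \<epsilon> / m"
  define k where "k = 1 / (n - 1)"
  have t: "t - a = - a * ((p - 1) - (p - 2) * e)"
    using assms(4) m unfolding m_def[symmetric] N2 e_def by (simp add: field_simps)
  have e2: "\<epsilon>^2 / m^2 = e^2" by (simp add: e_def power_divide)
  have dk: "x / (n - 1) = x * k" for x by (simp add: k_def)
  show ?thesis
    unfolding m_def[symmetric] s2 s4 t e2 dk e_def[symmetric]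
    by (simp add: power2_eq_square algebra_simps)
qed

lemma pointwise_nz:
  fixes u :: "real^'n::finite \<Rightarrow> real"
  assumes U: "open U" "x \<in> U" and C2: "Ck_on 2 U u" and n2: "CARD('n) \<ge> 2" and eps: "\<epsilon> > 0"
    and pde: "(\<Sum>i\<in>UNIV. pderiv_i i
            (\<lambda>y. (norm (grad u y)^2 + \<epsilon>) powr ((p - 2) / 2) * pderiv_i i u y) x) = 0"
    and nz: "grad u x \<noteq> 0"
  shows "hs_norm_sq (hess u x) \<ge> 2 * norm (grad (\<lambda>y. norm (grad u y)) x)^2
          + ((p - 1)^2 / (real CARD('n) - 1) - 1 - \<epsilon> / (sqrt (norm (grad u x)^2 + \<epsilon>))^2 * (2 * (p - 1) * (p - 2) / (real CARD('n) - 1))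
                    + \<epsilon>^2 / (sqrt (norm (grad u x)^2 + \<epsilon>))^4 * ((p - 2)^2 / (real CARD('n) - 1))) * (ninf_lap u x)^2"
    and "CARD('n) = 2 \<Longrightarrow> hs_norm_sq (hess u x) = 2 * norm (grad (\<lambda>y. norm (grad u y)) x)^2
          + ((p - 1)^2 / (real CARD('n) - 1) - 1 - \<epsilon> / (sqrt (norm (grad u x)^2 + \<epsilon>))^2 * (2 * (p - 1) * (p - 2) / (real CARD('n) - 1))
                    + \<epsilon>^2 / (sqrt (norm (grad u x)^2 + \<epsilon>))^4 * ((p - 2)^2 / (real CARD('n) - 1))) * (ninf_lap u x)^2"
proof -
  note F = Ck2_facts[OF C2]
  have dg: "\<And>i. pderiv_i i u differentiable (at x)" using F(2) U(2) by blast
  define g where "g = grad u x"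
  define H where "H = hess u x"
  define N where "N = norm g"
  have Npos: "N > 0" using nz by (simp add: N_def g_def)
  define v where "v = (1 / N) *\<^sub>R g"
  define q0 where "q0 = (\<chi> j. \<Sum>i\<in>UNIV. grad u x $ i * hess u x $ i $ j)"
  have sym: "\<And>i j. H$i$j = H$j$i" unfolding H_def by (rule hess_sym[OF U C2])
  have vv: "(\<Sum>i\<in>UNIV. v$i * v$i) = 1"
  proof -
    have "(\<Sum>i\<in>UNIV. v$i * v$i) = (\<Sum>i\<in>UNIV. (g$i)^2) / N^2"
      by (simp add: v_def sum_divide_distrib power2_eq_square)
    also have "\<dots> = 1" using Npos by (simp add: N_def norm_sq_vec[symmetric])
    finally show ?thesis .
  qed
  define q where "q = (\<chi> i. \<Sum>j\<in>UNIV. H$i$j * v$j)"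
  define a where "a = (\<Sum>i\<in>UNIV. v$i * q$i)"
  define t where "t = (\<Sum>i\<in>UNIV. H$i$i)"
  define Q where "Q = (\<Sum>i\<in>UNIV. q$i * q$i)"
  have HI1: "hs_norm_sq H \<ge> 2*Q - a^2 + (t - a)^2/(real CARD('n) - 1)"
    unfolding Q_def q_def a_def t_def by (rule hs_ineq(1)[OF sym vv n2])
  have HI2: "CARD('n) = 2 \<Longrightarrow> hs_norm_sq H = 2*Q - a^2 + (t - a)^2/(real CARD('n) - 1)"
    unfolding Q_def q_def a_def t_def by (rule hs_ineq(2)[OF sym vv n2])
  have gq: "grad (\<lambda>y. norm (grad u y)) x = q"
  proof -
    have "grad (\<lambda>y. norm (grad u y)) x = (1 / N) *\<^sub>R q0"
      using grad_norm_grad[OF dg nz] by (simp add: N_def g_def q0_def)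
    also have "\<dots> = q"
      by (simp add: vec_eq_iff q_def q0_def v_def sum_distrib_left H_def g_def
           hess_sym[OF U C2] mult_ac)
    finally show ?thesis .
  qed
  have nQ: "norm (grad (\<lambda>y. norm (grad u y)) x)^2 = Q"
    unfolding gq norm_sq_vec Q_def by (simp add: power2_eq_square)
  have la: "ninf_lap u x = a"
  proof -
    have "ninf_lap u x = (q0 \<bullet> g) / N^2"
      using ninf_lap_val[OF dg nz] by (simp add: q0_def N_def g_def)
    also have "\<dots> = a"
    proof -
      have h1: "(1 / N) *\<^sub>R q0 = q" using gq grad_norm_grad[OF dg nz]
        by (simp add: N_def g_def q0_def)
      have "q0 = N *\<^sub>R ((1 / N) *\<^sub>R q0)" using Npos by simp
      then have "q0 = N *\<^sub>R q" unfolding h1 .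
      then show ?thesis using Npos
        by (simp add: a_def v_def inner_vec_def power2_eq_square sum_divide_distrib mult_ac)
    qed
    finally show ?thesis .
  qed
  have tr: "t = - (p - 2) * (N^2 * a) / (N^2 + \<epsilon>)"
  proof -
    have "t = - (p - 2) * (q0 \<bullet> g) / (N^2 + \<epsilon>)"
      using pde_trace[OF dg eps pde] by (simp add: t_def H_def q0_def N_def g_def)
    moreover have "q0 \<bullet> g = N^2 * a"
    proof -
      have "(q0 \<bullet> g) / N^2 = a" using la ninf_lap_val[OF dg nz] by (simp add: q0_def N_def g_def)
      then show ?thesis using Npos by (simp add: field_simps)
    qed
    ultimately show ?thesis by simp
  qed
  have n1: "real CARD('n) > 1" using n2 by simp
  note PA = phi_alg[of "N^2" \<epsilon> "real CARD('n)" t p a, OF _ eps n1 tr]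
  have e: "2 * Q - a^2 + (t - a)^2/(real CARD('n) - 1) = 2 * norm (grad (\<lambda>y. norm (grad u y)) x)^2
          + ((p - 1)^2 / (real CARD('n) - 1) - 1 - \<epsilon> / (sqrt (norm (grad u x)^2 + \<epsilon>))^2 * (2 * (p - 1) * (p - 2) / (real CARD('n) - 1))
                    + \<epsilon>^2 / (sqrt (norm (grad u x)^2 + \<epsilon>))^4 * ((p - 2)^2 / (real CARD('n) - 1))) * (ninf_lap u x)^2"
    using PA unfolding nQ la N_def g_def by simp
  show "hs_norm_sq (hess u x) \<ge> 2 * norm (grad (\<lambda>y. norm (grad u y)) x)^2
          + ((p - 1)^2 / (real CARD('n) - 1) - 1 - \<epsilon> / (sqrt (norm (grad u x)^2 + \<epsilon>))^2 * (2 * (p - 1) * (p - 2) / (real CARD('n) - 1))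
                    + \<epsilon>^2 / (sqrt (norm (grad u x)^2 + \<epsilon>))^4 * ((p - 2)^2 / (real CARD('n) - 1))) * (ninf_lap u x)^2"
    using HI1 e unfolding H_def by linarith
  show "CARD('n) = 2 \<Longrightarrow> hs_norm_sq (hess u x) = 2 * norm (grad (\<lambda>y. norm (grad u y)) x)^2
          + ((p - 1)^2 / (real CARD('n) - 1) - 1 - \<epsilon> / (sqrt (norm (grad u x)^2 + \<epsilon>))^2 * (2 * (p - 1) * (p - 2) / (real CARD('n) - 1))
                    + \<epsilon>^2 / (sqrt (norm (grad u x)^2 + \<epsilon>))^4 * ((p - 2)^2 / (real CARD('n) - 1))) * (ninf_lap u x)^2"
    using HI2 e unfolding H_def by linarith
qed

lemma pointwise_zero:
  fixes u :: "real^'n::finite \<Rightarrow> real"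
  assumes dg: "\<And>i. pderiv_i i u differentiable (at x)" and z: "grad u x = 0"
    and hz: "\<And>i j. hess u x $ i $ j = 0"
  shows "grad (\<lambda>y. norm (grad u y)) x = 0" "ninf_lap u x = 0" "hs_norm_sq (hess u x) = 0"
proof -
  have gi0: "pderiv_i i u x = 0" for i using z by (simp add: grad_def vec_eq_iff)
  have di: "(pderiv_i i u has_derivative (\<lambda>h. 0 \<bullet> h)) (at x)" for i
  proof -
    have "grad (pderiv_i i u) x = 0" using hz by (simp add: vec_eq_iff grad_pderiv_hess)
    then show ?thesis using deriv_grad[OF dg[of i]] by simp
  qed
  have lim: "((\<lambda>y. \<bar>pderiv_i i u y\<bar> / norm (y - x)) \<longlongrightarrow> 0) (at x)" for i
    using di[of i] unfolding has_derivative_iff_norm by (simp add: gi0)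
  have limS: "((\<lambda>y. \<Sum>i\<in>UNIV. \<bar>pderiv_i i u y\<bar> / norm (y - x)) \<longlongrightarrow> 0) (at x)"
    using tendsto_sum[of UNIV "\<lambda>i y. \<bar>pderiv_i i u y\<bar> / norm (y - x)" "\<lambda>i. 0" "at x"] lim by simp
  have bnd: "norm (norm (norm (grad u y) - norm (grad u x) - 0 \<bullet> (y - x)) / norm (y - x))
      \<le> (\<Sum>i\<in>UNIV. \<bar>pderiv_i i u y\<bar> / norm (y - x))" for y
  proof -
    have "norm (grad u y) \<le> (\<Sum>i\<in>UNIV. \<bar>pderiv_i i u y\<bar>)"
      using norm_le_l1_cart[of "grad u y"] by (simp add: grad_def)
    then have "norm (grad u y) / norm (y - x) \<le> (\<Sum>i\<in>UNIV. \<bar>pderiv_i i u y\<bar>) / norm (y - x)"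
      by (rule divide_right_mono) simp
    then show ?thesis using z by (simp add: sum_divide_distrib[symmetric])
  qed
  have "((\<lambda>y. norm (norm (grad u y) - norm (grad u x) - 0 \<bullet> (y - x)) / norm (y - x)) \<longlongrightarrow> 0) (at x)"
    apply (rule Lim_null_comparison[where g="\<lambda>y. \<Sum>i\<in>UNIV. \<bar>pderiv_i i u y\<bar> / norm (y - x)"])
     apply (rule always_eventually)
    using bnd apply blast
    using limS by assumption
  then have "((\<lambda>y. norm (grad u y)) has_derivative (\<lambda>h. 0 \<bullet> h)) (at x)"
    unfolding has_derivative_iff_norm by (simp add: bounded_linear_inner_right)
  then show "grad (\<lambda>y. norm (grad u y)) x = 0" by (rule grad_of_deriv)
  show "ninf_lap u x = 0" using z by (simp add: ninf_lap_def)
  show "hs_norm_sq (hess u x) = 0" using hz by (simp add: hs_norm_sq_def)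
qed

lemma bad_negligible:
  fixes u :: "real^'n::finite \<Rightarrow> real"
  assumes C2: "Ck_on 2 U u"
  shows "negligible {y \<in> U. pderiv_i k u y = 0 \<and> hess u y $ k $ j \<noteq> 0}"
proof -
  note F = Ck2_facts[OF C2]
  define S where "S = {y \<in> U. hess u y $ k $ j \<noteq> 0}"
  define e where "e = (axis j 1 :: real^'n)"
  define f where "f y = y + (pderiv_i k u y - e \<bullet> y) *\<^sub>R e" for y
  define f' where "f' y h = h + (grad (pderiv_i k u) y \<bullet> h - e \<bullet> h) *\<^sub>R e" for y h
  have derf: "(f has_derivative f' y) (at y within S)" if "y \<in> S" for y
  proof -
    have yU: "y \<in> U" using that by (simp add: S_def)
    have "(pderiv_i k u has_derivative (\<lambda>h. grad (pderiv_i k u) y \<bullet> h)) (at y)"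
      using deriv_grad F(2)[OF yU] by blast
    then have "(f has_derivative f' y) (at y)"
      unfolding f_def[abs_def] f'_def
      by (intro has_derivative_add has_derivative_ident has_derivative_scaleR_left has_derivative_diff
          has_derivative_inner_right)
    then show ?thesis by (rule has_derivative_at_withinI)
  qed
  have injf: "inj (f' y)" if "y \<in> S" for y
  proof (rule injI)
    fix h1 h2 :: "real^'n"
    assume eq: "f' y h1 = f' y h2"
    define G where "G = grad (pderiv_i k u) y"
    have Gj: "G $ j \<noteq> 0" using that by (simp add: S_def G_def grad_pderiv_hess)
    have oth: "h1 $ i = h2 $ i" if "i \<noteq> j" for i
      using arg_cong[OF eq, of "\<lambda>z. z $ i"] that by (simp add: f'_def e_def axis_def)
    have "(f' y h1) $ j = (f' y h2) $ j" using eq by simp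
    then have "G \<bullet> h1 = G \<bullet> h2" by (simp add: f'_def e_def G_def inner_commute[of "axis j 1"] inner_axis)
    then have "G \<bullet> (h1 - h2) = 0" by (simp add: inner_diff_right)
    moreover have "G \<bullet> (h1 - h2) = G $ j * (h1 $ j - h2 $ j)"
    proof -
      have "G \<bullet> (h1 - h2) = (\<Sum>i\<in>UNIV. if i = j then G $ j * (h1 $ j - h2 $ j) else 0)"
        unfolding inner_vec_def by (rule sum.cong) (auto simp: oth)
      then show ?thesis by simp
    qed
    ultimately have "h1 $ j = h2 $ j" using Gj by simp
    with oth show "h1 = h2" by (metis vec_eq_iff)
  qed
  have "negligible {y \<in> S. f y \<in> {z. z $ j = 0}}"
    by (rule negligible_differentiable_vimage[OF negligible_standard_hyperplane_cart injf derf])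
  moreover have "{y \<in> S. f y \<in> {z. z $ j = 0}} = {y \<in> U. pderiv_i k u y = 0 \<and> hess u y $ k $ j \<noteq> 0}"
    by (auto simp: S_def f_def e_def inner_commute[of "axis j 1"] inner_axis)
  ultimately show ?thesis by simp
qed


theorem lemma3p5:
  fixes U :: "(real^'n::finite) set" and u :: "real^'n \<Rightarrow> real" and p \<epsilon> :: real
  assumes "CARD('n) \<ge> 2"
    and "1 < p"
    and "\<epsilon> > 0"
    and "smooth_bounded_domain U"
    and "smooth_on U u"
    and "continuous_on (closure U) u"
    and "\<forall>x\<in>U. (\<Sum>i\<in>UNIV. pderiv_i i
            (\<lambda>y. (norm (grad u y)^2 + \<epsilon>) powr ((p - 2) / 2) * pderiv_i i u y) x) = 0"
  shows "(AE x in lebesgue. x \<in> U \<longrightarrow>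
           (let n = real CARD('n); \<mu> = sqrt (norm (grad u x)^2 + \<epsilon>);
                \<Phi> = (p - 1)^2 / (n - 1) - 1 - \<epsilon> / \<mu>^2 * (2 * (p - 1) * (p - 2) / (n - 1))
                    + \<epsilon>^2 / \<mu>^4 * ((p - 2)^2 / (n - 1))
            in hs_norm_sq (hess u x) \<ge> 2 * norm (grad (\<lambda>y. norm (grad u y)) x)^2
                 + \<Phi> * (ninf_lap u x)^2))
       \<and> (CARD('n) = 2 \<longrightarrow>
          (AE x in lebesgue. x \<in> U \<longrightarrow>
           (let n = real CARD('n); \<mu> = sqrt (norm (grad u x)^2 + \<epsilon>);
                \<Phi> = (p - 1)^2 / (n - 1) - 1 - \<epsilon> / \<mu>^2 * (2 * (p - 1) * (p - 2) / (n - 1))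
                    + \<epsilon>^2 / \<mu>^4 * ((p - 2)^2 / (n - 1))
            in hs_norm_sq (hess u x) = 2 * norm (grad (\<lambda>y. norm (grad u y)) x)^2
                 + \<Phi> * (ninf_lap u x)^2)))"
proof -
  have oU: "open U" using assms(4) by (simp add: smooth_bounded_domain_def)
  have C2: "Ck_on 2 U u" using assms(5) by (simp add: smooth_on_def)
  define B where "B = \<Union> ((\<lambda>kj. {y \<in> U. pderiv_i (fst kj) u y = 0 \<and> hess u y $ fst kj $ snd kj \<noteq> 0}) ` (UNIV :: ('n \<times> 'n) set))"
  have negB: "negligible B"
    unfolding B_def by (rule negligible_Union) (auto intro: bad_negligible[OF C2])
  have nullB: "B \<in> null_sets lebesgue" using negB negligible_iff_null_sets by blast
  have zero_case: "grad (\<lambda>y. norm (grad u y)) x = 0 \<and> ninf_lap u x = 0 \<and> hs_norm_sq (hess u x) = 0"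
    if "x \<in> U" "x \<notin> B" "grad u x = 0" for x
  proof -
    have dg: "\<And>i. pderiv_i i u differentiable (at x)" using Ck2_facts(2)[OF C2] that(1) by blast
    have hz: "hess u x $ i $ j = 0" for i j
    proof -
      have "pderiv_i i u x = 0" using that(3) by (simp add: grad_def vec_eq_iff)
      then show ?thesis using that(1,2) unfolding B_def by auto
    qed
    show ?thesis using pointwise_zero[OF dg that(3) hz] by simp
  qed
  have good1: "hs_norm_sq (hess u x) \<ge> 2 * norm (grad (\<lambda>y. norm (grad u y)) x)^2
          + ((p - 1)^2 / (real CARD('n) - 1) - 1 - \<epsilon> / (sqrt (norm (grad u x)^2 + \<epsilon>))^2 * (2 * (p - 1) * (p - 2) / (real CARD('n) - 1))
                    + \<epsilon>^2 / (sqrt (norm (grad u x)^2 + \<epsilon>))^4 * ((p - 2)^2 / (real CARD('n) - 1))) * (ninf_lap u x)^2"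
    if "x \<in> U" "x \<notin> B" for x
  proof (cases "grad u x = 0")
    case True
    then show ?thesis using zero_case[OF that True] by simp
  next
    case False
    show ?thesis using pointwise_nz(1)[OF oU that(1) C2 assms(1) assms(3) _ False] assms(7) that(1) by blast
  qed
  have good2: "hs_norm_sq (hess u x) = 2 * norm (grad (\<lambda>y. norm (grad u y)) x)^2
          + ((p - 1)^2 / (real CARD('n) - 1) - 1 - \<epsilon> / (sqrt (norm (grad u x)^2 + \<epsilon>))^2 * (2 * (p - 1) * (p - 2) / (real CARD('n) - 1))
                    + \<epsilon>^2 / (sqrt (norm (grad u x)^2 + \<epsilon>))^4 * ((p - 2)^2 / (real CARD('n) - 1))) * (ninf_lap u x)^2"
    if "x \<in> U" "x \<notin> B" "CARD('n) = 2" for x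
  proof (cases "grad u x = 0")
    case True
    then show ?thesis using zero_case[OF that(1,2) True] by simp
  next
    case False
    show ?thesis using pointwise_nz(2)[OF oU that(1) C2 assms(1) assms(3) _ False] assms(7) that by blast
  qed
  show ?thesis
    unfolding Let_def
  proof (intro conjI impI)
    show "AE x in lebesgue. x \<in> U \<longrightarrow> hs_norm_sq (hess u x) \<ge> 2 * norm (grad (\<lambda>y. norm (grad u y)) x)^2
          + ((p - 1)^2 / (real CARD('n) - 1) - 1 - \<epsilon> / (sqrt (norm (grad u x)^2 + \<epsilon>))^2 * (2 * (p - 1) * (p - 2) / (real CARD('n) - 1))
                    + \<epsilon>^2 / (sqrt (norm (grad u x)^2 + \<epsilon>))^4 * ((p - 2)^2 / (real CARD('n) - 1))) * (ninf_lap u x)^2"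
      by (rule AE_I'[OF nullB]) (use good1 in blast)
    assume c2: "CARD('n) = 2"
    show "AE x in lebesgue. x \<in> U \<longrightarrow> hs_norm_sq (hess u x) = 2 * norm (grad (\<lambda>y. norm (grad u y)) x)^2
          + ((p - 1)^2 / (real CARD('n) - 1) - 1 - \<epsilon> / (sqrt (norm (grad u x)^2 + \<epsilon>))^2 * (2 * (p - 1) * (p - 2) / (real CARD('n) - 1))
                    + \<epsilon>^2 / (sqrt (norm (grad u x)^2 + \<epsilon>))^4 * ((p - 2)^2 / (real CARD('n) - 1))) * (ninf_lap u x)^2"
      by (rule AE_I'[OF nullB]) (use good2 c2 in blast)
  qed
qed


end
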